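(* For all integers $p,l\geq 0$ and $t>0$, $$D^{l}\left\{\frac{(1-t)^{p+1}}{t}\right\}=(-1)^{l}\sum_{s=0}^{l}\frac{(l+s)!\,(p+1)!}{2^{s}s!\,(l-s)!\,(p-l+s+1)!}\frac{(1-t)^{p-l+s+1}}{t^{l+s+1}}=(-1)^{l}l!\sum_{s=0}^{l}\frac{1}{2^{s}}\binom{p+1}{l-s}\binom{l+s}{s}\frac{(1-t)^{p-l+s+1}}{t^{l+s+1}}.$$
   Context: $D$ denotes the operator $(D\varphi)(t)=\frac{1}{t}\varphi'(t)$ acting on functions of $t$, and $D^l$ its $l$-fold iterate. Conventions: $\binom{a}{b}=0$ if $b>a$ or $b<0$, and $1/N!=0$ for negative integers $N$. *)

theory Defs
  imports "HOL-Analysis.Analysis"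
begin

definition Dop :: "(real \<Rightarrow> real) \<Rightarrow> (real \<Rightarrow> real)" where
  "Dop \<phi> = (\<lambda>t. deriv \<phi> t / t)"

definition inv_fact :: "int \<Rightarrow> real" where
  "inv_fact N = (if N < 0 then 0 else 1 / fact (nat N))"

end

theory Submission
  imports Defs
begin


fun cc :: "nat \<Rightarrow> nat \<Rightarrow> nat \<Rightarrow> real" where
  "cc p 0 s = (if s = 0 then 1 else 0)"
| "cc p (Suc l) s = cc p l s * real (p+1+s-l) + (if s = 0 then 0 else cc p l (s-1) * real (l+s))"

definition GG :: "nat \<Rightarrow> nat \<Rightarrow> real \<Rightarrow> real" where
  "GG p l x = (-1)^l * (\<Sum>s=0..l. cc p l s * ((1-x)^(p+1+s-l) / x^(l+s+1)))"

lemma cc_zero: "s > l \<Longrightarrow> cc p l s = 0"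
  by (induction l arbitrary: s) auto

lemma T_deriv:
  fixes x :: real assumes "x > 0"
  shows "((\<lambda>x. (1-x)^m / x^n) has_real_derivative
     (-(real m)*(1-x)^(m-1)/x^n - real n*(1-x)^m/x^(Suc n))) (at x)"
proof -
  have "((\<lambda>x. (1-x)^m / x^n) has_real_derivative
     ((real m * (1-x)^(m-1) * (-1)) * x^n - (1-x)^m * (real n * x^(n-1))) / (x^n * x^n)) (at x)"
    using assms by (auto intro!: derivative_eq_intros)
  moreover have "((real m * (1-x)^(m-1) * (-1)) * x^n - (1-x)^m * (real n * x^(n-1))) / (x^n * x^n)
      = (-(real m)*(1-x)^(m-1)/x^n - real n*(1-x)^m/x^(Suc n))"
  proof (cases n)
    case 0 then show ?thesis by simp
  next
    case (Suc k)
    then show ?thesis using assms by (simp add: field_simps)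
  qed
  ultimately show ?thesis by simp
qed

lemma GG_step:
  fixes x :: real assumes x: "x > 0"
  shows "(GG p l has_real_derivative x * GG p (Suc l) x) (at x)"
proof -
  let ?T = "\<lambda>l s x. (1-x)^(p+1+s-l) / (x::real)^(l+s+1)"
  define D where "D s = (-(real (p+1+s-l))*(1-x)^(p+1+s-l-1)/x^(l+s+1) - real (l+s+1)*(1-x)^(p+1+s-l)/x^(Suc (l+s+1)))" for s
  have "((\<lambda>x. (-1)^l * (\<Sum>s=0..l. cc p l s * ?T l s x)) has_real_derivative
          (-1)^l * (\<Sum>s=0..l. cc p l s * D s)) (at x)"
    unfolding D_def
    by (intro DERIV_cmult DERIV_sum T_deriv[OF x])
  moreover have "(-1)^l * (\<Sum>s=0..l. cc p l s * D s) = x * GG p (Suc l) x"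
  proof -
    have A: "x * ?T (Suc l) s x = (1-x)^(p+1+s-l-1)/x^(l+s+1)" for s
      using x by (simp add: field_simps)
    have B: "x * ?T (Suc l) (Suc s) x = (1-x)^(p+1+s-l)/x^(Suc (l+s+1))" for s
      using x by (simp add: field_simps)
    have "x * GG p (Suc l) x = (-1)^Suc l * ((\<Sum>s=0..Suc l. cc p l s * real (p+1+s-l) * (x * ?T (Suc l) s x))
         + (\<Sum>s=0..Suc l. (if s = 0 then 0 else cc p l (s-1) * real (l+s)) * (x * ?T (Suc l) s x)))"
    proof -
      have "x * GG p (Suc l) x = (-1)^Suc l * (\<Sum>s=0..Suc l. cc p (Suc l) s * (x * ?T (Suc l) s x))"
        unfolding GG_def by (simp only: sum_distrib_left mult_ac)
      also have "(\<Sum>s=0..Suc l. cc p (Suc l) s * (x * ?T (Suc l) s x)) =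
         (\<Sum>s=0..Suc l. cc p l s * real (p+1+s-l) * (x * ?T (Suc l) s x))
         + (\<Sum>s=0..Suc l. (if s = 0 then 0 else cc p l (s-1) * real (l+s)) * (x * ?T (Suc l) s x))"
        by (simp only: sum.distrib[symmetric] cc.simps distrib_right)
      finally show ?thesis .
    qed
    also have "(\<Sum>s=0..Suc l. cc p l s * real (p+1+s-l) * (x * ?T (Suc l) s x))
        = (\<Sum>s=0..l. cc p l s * real (p+1+s-l) * ((1-x)^(p+1+s-l-1)/x^(l+s+1)))"
      using x by (simp add: cc_zero A)
    also have "(\<Sum>s=0..Suc l. (if s = 0 then 0 else cc p l (s-1) * real (l+s)) * (x * ?T (Suc l) s x))
        = (\<Sum>s=0..l. cc p l s * real (l+s+1) * ((1-x)^(p+1+s-l)/x^(Suc (l+s+1))))"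
      using x by (subst sum.atLeast0_atMost_Suc_shift) (simp add: B Suc_diff_le del: sum.atLeast0_atMost_Suc)
    finally have E: "x * GG p (Suc l) x = (- 1) ^ Suc l *
      ((\<Sum>s = 0..l. cc p l s * real (p + 1 + s - l) * ((1 - x) ^ (p + 1 + s - l - 1) / x ^ (l + s + 1))) +
       (\<Sum>s = 0..l. cc p l s * real (l + s + 1) * ((1 - x) ^ (p + 1 + s - l) / x ^ Suc (l + s + 1))))" .
    show ?thesis unfolding D_def E
      by (simp only: sum_distrib_left sum.distrib[symmetric]) (rule sum.cong[OF refl], simp add: algebra_simps diff_divide_distrib add_divide_distrib)
  qed
  ultimately show ?thesis unfolding GG_def by simp
qed



definition AA :: "nat \<Rightarrow> nat \<Rightarrow> nat \<Rightarrow> real" where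
  "AA p l s = fact (l+s) * fact (p+1) / (2^s * fact s * fact (l-s))"

lemma AA_bessel:
  assumes "0 < s" "s \<le> l"
  shows "AA p (Suc l) s = AA p l s + real (l+s) * AA p l (s-1)"
proof -
  obtain a r where s: "s = Suc a" and l: "l = Suc a + r"
    using assms by (metis gr0_implies_Suc le_iff_add)
  define n where "n = 2*a + r + 1"
  define P where "P = (fact (p+1) :: real)"
  define fa where "fa = (fact a :: real)"
  define fr where "fr = (fact r :: real)"
  define fn where "fn = (fact n :: real)"
  have pos: "fa > 0" "fr > 0" "fn > 0" "P > 0" unfolding fa_def fr_def fn_def P_def by auto
  have fn1: "fact (l+s) = real (Suc n) * fn" "fact (Suc l + s) = real (Suc (Suc n)) * (real (Suc n) * fn)"
     "fact (l + (s-1)) = fn"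
  proof -
    have q: "l+s = Suc n" "Suc l + s = Suc (Suc n)" "l+(s-1) = n" using s l unfolding n_def by simp_all
    show "fact (l+s) = real (Suc n) * fn" "fact (Suc l + s) = real (Suc (Suc n)) * (real (Suc n) * fn)"
     "fact (l + (s-1)) = fn" unfolding q fn_def by (simp_all only: fact_Suc of_nat_fact)
  qed
  have fs: "fact s = real (Suc a) * fa" "fact (s-1) = fa" "fact (Suc r) = real (Suc r) * fr" "fact r = fr"
    unfolding s fa_def fr_def by simp_all
  have e1: "Suc l - s = Suc r" "l - s = r" "l - (s-1) = Suc r" using s l by auto
  have ls: "real (l+s) = real (Suc n)" using s l n_def by simp
  have nn: "real (Suc (Suc n)) = real (Suc r) + 2 * real (Suc a)" using n_def by simp
  have ps: "(2::real)^s = 2 * 2^a" "(2::real)^(s-1) = 2^a" using s by simp_all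
  define SA where "SA = real (Suc a)"
  define SR where "SR = real (Suc r)"
  define SN where "SN = real (Suc n)"
  have pos2: "SA > 0" "SR > 0" "SN > 0" unfolding SA_def SR_def SN_def by auto
  show ?thesis unfolding AA_def fn1 fs e1 ls ps P_def[symmetric] nn SA_def[symmetric] SR_def[symmetric] SN_def[symmetric]
    using pos pos2 by (simp add: field_simps)
qed

lemma AA_top: "AA p (Suc l) (Suc l) = real (2*l+1) * AA p l l"
proof -
  define P where "P = (fact (p+1) :: real)"
  define fl where "fl = (fact l :: real)"
  define f2 where "f2 = (fact (l+l) :: real)"
  define L where "L = real (Suc l)"
  define M where "M = real (2*l+1)"
  have pos: "fl > 0" "f2 > 0" "P > 0" "L > 0" "M > 0" unfolding fl_def f2_def P_def L_def M_def by auto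
  have q: "Suc l + Suc l = Suc (Suc (l+l))" by simp
  have f: "fact (Suc l + Suc l) = real (Suc (Suc (l+l))) * (real (Suc (l+l)) * f2)"
    unfolding f2_def q by (simp only: fact_Suc of_nat_fact)
  have g: "fact (Suc l) = L * fl" unfolding fl_def L_def by (simp only: fact_Suc of_nat_fact)
  have h: "real (Suc (Suc (l+l))) = 2 * L" "real (Suc (l+l)) = M" unfolding L_def M_def by simp_all
  have e: "Suc l - Suc l = 0" "l - l = 0" "(2::real)^Suc l = 2 * 2^l" by simp_all
  show ?thesis unfolding AA_def f g h e M_def[symmetric] fl_def[symmetric] f2_def[symmetric] P_def[symmetric]
    using pos by (simp add: field_simps)
qed

lemma AA_bot: "AA p (Suc l) 0 = AA p l 0"
  unfolding AA_def by simp

lemma IF: "inv_fact k * real (nat k) = inv_fact (k - 1)"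
proof (cases "k \<ge> 1")
  case True
  then obtain m where m: "nat k = Suc m" using not0_implies_Suc by fastforce
  have "nat (k-1) = m" using m by simp
  define SM where "SM = real (Suc m)"
  have "SM > 0" unfolding SM_def by simp
  have fs: "(fact (Suc m) :: real) = SM * fact m" unfolding SM_def by (simp only: fact_Suc of_nat_fact)
  have "inv_fact k * real (nat k) = 1 / fact (Suc m) * SM" unfolding inv_fact_def using True m SM_def by simp
  also have "\<dots> = 1 / fact m" unfolding fs using \<open>SM > 0\<close> by simp
  finally show ?thesis unfolding inv_fact_def using True \<open>nat (k-1) = m\<close> by simp
next
  case False
  then show ?thesis unfolding inv_fact_def by auto
qed


lemma cc_closed: "cc p l s = (if s \<le> l then AA p l s * inv_fact (int p - int l + int s + 1) else 0)"
proof (induction l arbitrary: s)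
  case 0
  have "nat (int p + 1) = p + 1" by simp
  then show ?case by (auto simp: AA_def inv_fact_def)
next
  case (Suc l)
  define k where "k = int p - int l + int s + 1"
  have rk: "real (p+1+s-l) = real (nat k)" unfolding k_def by simp
  have k1: "int p - int (Suc l) + int s + 1 = k - 1" unfolding k_def by simp
  show ?case
  proof (cases "s > Suc l")
    case True then show ?thesis by (simp add: cc_zero)
  next
    case False
    show ?thesis
    proof (cases "s = Suc l")
      case True
      then show ?thesis using Suc.IH[of l] by (simp add: cc_zero AA_top algebra_simps)
    next
      case ns: False
      with False have sl: "s \<le> l" by simp
      show ?thesis
      proof (cases "s = 0")
        case True
        have "cc p (Suc l) s = AA p l 0 * (inv_fact k * real (nat k))"
          using Suc.IH[of 0] True rk k_def by simp
        also have "\<dots> = AA p (Suc l) s * inv_fact (int p - int (Suc l) + int s + 1)"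
          using k1 True by (simp only: IF AA_bot)
        finally show ?thesis using True by simp
      next
        case s0: False
        have k2: "int p - int l + int (s-1) + 1 = k - 1" unfolding k_def using s0 by simp
        have "cc p (Suc l) s = AA p l s * (inv_fact k * real (nat k)) + real (l+s) * AA p l (s-1) * inv_fact (k-1)"
          using Suc.IH[of s] Suc.IH[of "s-1"] sl s0 rk k2 unfolding k_def by (simp add: algebra_simps)
        also have "\<dots> = AA p (Suc l) s * inv_fact (int p - int (Suc l) + int s + 1)"
          using AA_bessel[of s l p] s0 sl unfolding IF k1 by (simp add: algebra_simps)
        finally show ?thesis using sl by simp
      qed
    qed
  qed
qed



lemma iter: "\<forall>x>0. (Dop ^^ l) (\<lambda>x. (1 - x) ^ (p + 1) / x) x = GG p l x"
proof (induction l)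
  case 0
  show ?case by (simp add: GG_def)
next
  case (Suc l)
  show ?case
  proof (intro allI impI)
    fix x :: real assume x: "x > 0"
    have "((Dop ^^ l) (\<lambda>x. (1 - x) ^ (p + 1) / x) has_real_derivative x * GG p (Suc l) x) (at x)"
      by (rule has_field_derivative_transform_within_open[OF GG_step[OF x], of "{0<..}"])
         (use x Suc.IH in auto)
    then have "deriv ((Dop ^^ l) (\<lambda>x. (1 - x) ^ (p + 1) / x)) x = x * GG p (Suc l) x"
      by (rule DERIV_imp_deriv)
    then show "(Dop ^^ Suc l) (\<lambda>x. (1 - x) ^ (p + 1) / x) x = GG p (Suc l) x"
      using x by (simp add: Dop_def)
  qed
qed

lemma term1:
  assumes "s \<le> l" "t > 0"
  shows "cc p l s * ((1-t)^(p+1+s-l) / t^(l+s+1)) =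
     fact (l + s) * fact (p + 1) / (2 ^ s * fact s * fact (l - s))
                 * inv_fact (int p - int l + int s + 1)
                 * ((1 - t) powi (int p - int l + int s + 1) / t ^ (l + s + 1))"
proof (cases "int p - int l + int s + 1 < 0")
  case True
  then show ?thesis using assms by (simp add: cc_closed inv_fact_def)
next
  case False
  have "(1 - t) powi (int p - int l + int s + 1) = (1-t)^(p+1+s-l)"
  proof -
    have e: "int p - int l + int s + 1 = int (p+1+s-l)" using False by simp
    show ?thesis by (subst e) (rule power_int_of_nat)
  qed
  then show ?thesis using assms by (simp add: cc_closed AA_def)
qed

lemma term2:
  assumes "s \<le> l"
  shows "fact (l + s) * fact (p + 1) / (2 ^ s * fact s * fact (l - s))
                 * inv_fact (int p - int l + int s + 1) * (X::real)
     = fact l * (1 / 2 ^ s * real ((p + 1) choose (l - s))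
                 * real ((l + s) choose s) * X)"
proof (cases "l - s \<le> p + 1")
  case False
  then have "int p - int l + int s + 1 < 0" using assms by linarith
  then show ?thesis using False by (simp add: inv_fact_def)
next
  case True
  have n: "nat (int p - int l + int s + 1) = p + 1 - (l - s)" using True assms by simp
  have "\<not> int p - int l + int s + 1 < 0" using True assms by simp
  then have i: "inv_fact (int p - int l + int s + 1) = 1 / fact (p + 1 - (l - s))"
    unfolding inv_fact_def n by simp
  have b1: "real ((p + 1) choose (l - s)) = fact (p+1) / (fact (l-s) * fact (p + 1 - (l - s)))"
    using True by (rule binomial_fact)
  have b2: "real ((l + s) choose s) = fact (l+s) / (fact s * fact l)"
    using binomial_fact[of s "l+s"] by simp
  show ?thesis unfolding i b1 b2 by (simp add: field_simps)
qed

theorem lemma3p2: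
  fixes p l :: nat and t :: real
  assumes "t > 0"
  shows "(Dop ^^ l) (\<lambda>x. (1 - x) ^ (p + 1) / x) t
           = (-1) ^ l * (\<Sum>s = 0..l. fact (l + s) * fact (p + 1) / (2 ^ s * fact s * fact (l - s))
                 * inv_fact (int p - int l + int s + 1)
                 * ((1 - t) powi (int p - int l + int s + 1) / t ^ (l + s + 1)))
       \<and> (-1) ^ l * (\<Sum>s = 0..l. fact (l + s) * fact (p + 1) / (2 ^ s * fact s * fact (l - s))
                 * inv_fact (int p - int l + int s + 1)
                 * ((1 - t) powi (int p - int l + int s + 1) / t ^ (l + s + 1)))
           = (-1) ^ l * fact l * (\<Sum>s = 0..l. 1 / 2 ^ s * real ((p + 1) choose (l - s))
                 * real ((l + s) choose s)
                 * ((1 - t) powi (int p - int l + int s + 1) / t ^ (l + s + 1)))"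
proof
  show "(Dop ^^ l) (\<lambda>x. (1 - x) ^ (p + 1) / x) t
           = (-1) ^ l * (\<Sum>s = 0..l. fact (l + s) * fact (p + 1) / (2 ^ s * fact s * fact (l - s))
                 * inv_fact (int p - int l + int s + 1)
                 * ((1 - t) powi (int p - int l + int s + 1) / t ^ (l + s + 1)))"
    unfolding iter[rule_format, OF assms] GG_def
    by (rule arg_cong[where f="\<lambda>u. (-1)^l * u"], rule sum.cong[OF refl], rule term1) (use assms in auto)
  show "(-1) ^ l * (\<Sum>s = 0..l. fact (l + s) * fact (p + 1) / (2 ^ s * fact s * fact (l - s))
                 * inv_fact (int p - int l + int s + 1)
                 * ((1 - t) powi (int p - int l + int s + 1) / t ^ (l + s + 1)))
           = (-1) ^ l * fact l * (\<Sum>s = 0..l. 1 / 2 ^ s * real ((p + 1) choose (l - s))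
                 * real ((l + s) choose s)
                 * ((1 - t) powi (int p - int l + int s + 1) / t ^ (l + s + 1)))"
  proof -
    have "(\<Sum>s = 0..l. fact (l + s) * fact (p + 1) / (2 ^ s * fact s * fact (l - s))
                 * inv_fact (int p - int l + int s + 1)
                 * ((1 - t) powi (int p - int l + int s + 1) / t ^ (l + s + 1)))
           = fact l * (\<Sum>s = 0..l. 1 / 2 ^ s * real ((p + 1) choose (l - s))
                 * real ((l + s) choose s)
                 * ((1 - t) powi (int p - int l + int s + 1) / t ^ (l + s + 1)))"
      unfolding sum_distrib_left by (rule sum.cong[OF refl], rule term2, simp)
    then show ?thesis by (simp add: mult.assoc)
  qed
qed

end
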